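(* Let $\boldsymbol{\lambda}\in\Delta_N$, $\boldsymbol{\nu}=(\nu_1,\dots,\nu_N)\in\mathcal{P}_1(\mathbb{R})^N$, $\theta\in[0,1]$, $\nu^\theta=\mathrm{VMed}_{\boldsymbol{\lambda}}(\theta,\boldsymbol{\nu})$ and $\mu^\theta=\mathrm{HMed}_{\boldsymbol{\lambda}}(\theta,\boldsymbol{\nu})$. Then: (1) if $\nu_1,\dots,\nu_N$ are atomless, then so are $\nu^\theta$ and $\mu^\theta$; (2) if $\nu_1,\dots,\nu_N$ have connected supports, then so does $\mu^\theta$.
   Context: $\Delta_N$ is the unit simplex of $\mathbb{R}^N$; $\mathcal{P}_1(\mathbb{R})$ denotes Borel probability measures on $\mathbb{R}$ with finite first moment. For $\nu\in\mathcal{P}_1(\mathbb{R})$, $F_\nu(x)=\nu((-\infty,x])$ and $Q_\nu(t)=\inf\{x:F_\nu(x)\ge t\}$. For $\mathbf{x}\in\mathbb{R}^N$, $\mathrm{M}^-_{\boldsymbol{\lambda}}(\mathbf{x})=\inf\{y:\sum_{i:x_i\le y}\lambda_i\ge\frac12\}$, $\mathrm{M}^+_{\boldsymbol{\lambda}}(\mathbf{x})=\sup\{y:\sum_{i:x_i<y}\lambda_i\le\frac12\}$. $\mathrm{VMed}_{\boldsymbol{\lambda}}(\theta,\boldsymbol{\nu})$ is the probability measure with cdf $(1-\theta)\mathrm{M}^-_{\boldsymbol{\lambda}}(F_{\nu_1}(x),\dots,F_{\nu_N}(x))+\theta\mathrm{M}^+_{\boldsymbol{\lambda}}(F_{\nu_1}(x),\dots,F_{\nu_N}(x))$;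 $\mathrm{HMed}_{\boldsymbol{\lambda}}(\theta,\boldsymbol{\nu})$ is the probability measure whose quantile function on $(0,1)$ is $(1-\theta)\mathrm{M}^-_{\boldsymbol{\lambda}}(Q_{\nu_1}(t),\dots,Q_{\nu_N}(t))+\theta\mathrm{M}^+_{\boldsymbol{\lambda}}(Q_{\nu_1}(t),\dots,Q_{\nu_N}(t))$. *)

theory Defs
  imports "HOL-Probability.Probability"
begin

definition unit_simplex :: "nat \<Rightarrow> (nat \<Rightarrow> real) set" where
  "unit_simplex N = {l. (\<forall>i<N. 0 \<le> l i) \<and> (\<Sum>i<N. l i) = 1}"

definition P1 :: "real measure set" where
  "P1 = {M. prob_space M \<and> sets M = sets borel \<and> integrable M (\<lambda>x. \<bar>x\<bar>)}"

definition quantile :: "real measure \<Rightarrow> real \<Rightarrow> real" where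
  "quantile M t = Inf {x. cdf M x \<ge> t}"

definition Mminus :: "nat \<Rightarrow> (nat \<Rightarrow> real) \<Rightarrow> (nat \<Rightarrow> real) \<Rightarrow> real" where
  "Mminus N l x = Inf {y. (\<Sum>i\<in>{i. i < N \<and> x i \<le> y}. l i) \<ge> 1/2}"

definition Mplus :: "nat \<Rightarrow> (nat \<Rightarrow> real) \<Rightarrow> (nat \<Rightarrow> real) \<Rightarrow> real" where
  "Mplus N l x = Sup {y. (\<Sum>i\<in>{i. i < N \<and> x i < y}. l i) \<le> 1/2}"

definition is_VMed :: "nat \<Rightarrow> (nat \<Rightarrow> real) \<Rightarrow> real \<Rightarrow> (nat \<Rightarrow> real measure) \<Rightarrow> real measure \<Rightarrow> bool" where
  "is_VMed N l \<theta> nu M \<longleftrightarrow> prob_space M \<and> sets M = sets borel \<and>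
     (\<forall>x. cdf M x = (1 - \<theta>) * Mminus N l (\<lambda>i. cdf (nu i) x) + \<theta> * Mplus N l (\<lambda>i. cdf (nu i) x))"

definition is_HMed :: "nat \<Rightarrow> (nat \<Rightarrow> real) \<Rightarrow> real \<Rightarrow> (nat \<Rightarrow> real measure) \<Rightarrow> real measure \<Rightarrow> bool" where
  "is_HMed N l \<theta> nu M \<longleftrightarrow> prob_space M \<and> sets M = sets borel \<and>
     (\<forall>t\<in>{0<..<1}. quantile M t = (1 - \<theta>) * Mminus N l (\<lambda>i. quantile (nu i) t) + \<theta> * Mplus N l (\<lambda>i. quantile (nu i) t))"

definition atomless :: "real measure \<Rightarrow> bool" where
  "atomless M \<longleftrightarrow> (\<forall>x. emeasure M {x} = 0)"

definition msupp :: "real measure \<Rightarrow> real set" where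
  "msupp M = {x. \<forall>e>0. emeasure M (ball x e) > 0}"

end

theory Submission
  imports Defs
begin

lemma N_pos: assumes "l \<in> unit_simplex N" shows "0 < N"
  using assms by (cases N) (auto simp: unit_simplex_def)

lemma abs_le_sumabs: "(i::nat) < N \<Longrightarrow> \<bar>x i\<bar> \<le> (\<Sum>j<N. \<bar>x j::real\<bar>)"
  by (rule member_le_sum[of i "{..<N}" "\<lambda>j. \<bar>x j\<bar>"]) auto

lemma Mminus_sets:
  fixes x :: "nat \<Rightarrow> real"
  assumes "l \<in> unit_simplex N"
  shows "{y. (\<Sum>i\<in>{i. i < N \<and> x i \<le> y}. l i) \<ge> 1/2} \<noteq> {}"
    and "bdd_below {y. (\<Sum>i\<in>{i. i < N \<and> x i \<le> y}. l i) \<ge> 1/2}"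
proof -
  let ?s = "\<Sum>j<N. \<bar>x j\<bar>"
  have "{i. i < N \<and> x i \<le> ?s} = {..<N}"
    using abs_le_sumabs[of _ N x] by force
  then have "?s \<in> {y. (\<Sum>i\<in>{i. i < N \<and> x i \<le> y}. l i) \<ge> 1/2}"
    using assms by (simp add: unit_simplex_def)
  then show "{y. (\<Sum>i\<in>{i. i < N \<and> x i \<le> y}. l i) \<ge> 1/2} \<noteq> {}" by blast
  show "bdd_below {y. (\<Sum>i\<in>{i. i < N \<and> x i \<le> y}. l i) \<ge> 1/2}"
  proof (rule bdd_belowI[of _ "- ?s - 1"])
    fix y assume y: "y \<in> {y. (\<Sum>i\<in>{i. i < N \<and> x i \<le> y}. l i) \<ge> 1/2}"
    show "- ?s - 1 \<le> y"
    proof (rule ccontr)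
      assume "\<not> - ?s - 1 \<le> y"
      then have "{i. i < N \<and> x i \<le> y} = {}"
        using abs_le_sumabs[of _ N x] by force
      with y show False by simp
    qed
  qed
qed

lemma Mplus_sets:
  fixes x :: "nat \<Rightarrow> real"
  assumes "l \<in> unit_simplex N"
  shows "{y. (\<Sum>i\<in>{i. i < N \<and> x i < y}. l i) \<le> 1/2} \<noteq> {}"
    and "bdd_above {y. (\<Sum>i\<in>{i. i < N \<and> x i < y}. l i) \<le> 1/2}"
proof -
  let ?s = "\<Sum>j<N. \<bar>x j\<bar>"
  have e: "{i. i < N \<and> x i < - ?s - 1} = {}"
    using abs_le_sumabs[of _ N x] by force
  have "- ?s - 1 \<in> {y. (\<Sum>i\<in>{i. i < N \<and> x i < y}. l i) \<le> 1/2}"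
    unfolding mem_Collect_eq e by simp
  then show "{y. (\<Sum>i\<in>{i. i < N \<and> x i < y}. l i) \<le> 1/2} \<noteq> {}" by blast
  show "bdd_above {y. (\<Sum>i\<in>{i. i < N \<and> x i < y}. l i) \<le> 1/2}"
  proof (rule bdd_aboveI[of _ "?s + 1"])
    fix y assume y: "y \<in> {y. (\<Sum>i\<in>{i. i < N \<and> x i < y}. l i) \<le> 1/2}"
    show "y \<le> ?s + 1"
    proof (rule ccontr)
      assume "\<not> y \<le> ?s + 1"
      then have "{i. i < N \<and> x i < y} = {..<N}"
        using abs_le_sumabs[of _ N x] by force
      with y assms show False by (simp add: unit_simplex_def)
    qed
  qed
qed

lemma Mminus_le:
  assumes l: "l \<in> unit_simplex N" and xy: "\<forall>i<N. x i \<le> y i + c"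
  shows "Mminus N l x \<le> Mminus N l y + c"
proof -
  have nn: "\<forall>i<N. 0 \<le> l i" using l by (simp add: unit_simplex_def)
  have "Mminus N l x - c \<le> Mminus N l y"
    unfolding Mminus_def
  proof (rule cInf_greatest[OF Mminus_sets(1)[OF l]])
    fix z assume z: "z \<in> {y'. (\<Sum>i\<in>{i. i < N \<and> y i \<le> y'}. l i) \<ge> 1/2}"
    have "(\<Sum>i\<in>{i. i < N \<and> y i \<le> z}. l i) \<le> (\<Sum>i\<in>{i. i < N \<and> x i \<le> z + c}. l i)"
      using xy nn by (intro sum_mono2) force+
    with z have "z + c \<in> {y. (\<Sum>i\<in>{i. i < N \<and> x i \<le> y}. l i) \<ge> 1/2}" by simp
    then have "Inf {y. (\<Sum>i\<in>{i. i < N \<and> x i \<le> y}. l i) \<ge> 1/2} \<le> z + c"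
      by (rule cInf_lower[OF _ Mminus_sets(2)[OF l]])
    then show "Inf {y. (\<Sum>i\<in>{i. i < N \<and> x i \<le> y}. l i) \<ge> 1/2} - c \<le> z" by simp
  qed
  then show ?thesis by simp
qed

lemma Mplus_le:
  assumes l: "l \<in> unit_simplex N" and xy: "\<forall>i<N. x i \<le> y i + c"
  shows "Mplus N l x \<le> Mplus N l y + c"
proof -
  have nn: "\<forall>i<N. 0 \<le> l i" using l by (simp add: unit_simplex_def)
  have "Mplus N l x \<le> Mplus N l y + c"
    unfolding Mplus_def
  proof (rule cSup_least[OF Mplus_sets(1)[OF l]])
    fix z assume z: "z \<in> {y'. (\<Sum>i\<in>{i. i < N \<and> x i < y'}. l i) \<le> 1/2}"
    have "(\<Sum>i\<in>{i. i < N \<and> y i < z - c}. l i) \<le> (\<Sum>i\<in>{i. i < N \<and> x i < z}. l i)"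
      using xy nn by (intro sum_mono2) force+
    with z have "z - c \<in> {y'. (\<Sum>i\<in>{i. i < N \<and> y i < y'}. l i) \<le> 1/2}" by simp
    then have "z - c \<le> Sup {y'. (\<Sum>i\<in>{i. i < N \<and> y i < y'}. l i) \<le> 1/2}"
      by (rule cSup_upper[OF _ Mplus_sets(2)[OF l]])
    then show "z \<le> Sup {y'. (\<Sum>i\<in>{i. i < N \<and> y i < y'}. l i) \<le> 1/2} + c" by simp
  qed
  then show ?thesis .
qed

lemma med_le:
  assumes l: "l \<in> unit_simplex N" and xy: "\<forall>i<N. x i \<le> y i + c"
    and th: "0 \<le> \<theta>" "\<theta> \<le> 1"
  shows "(1 - \<theta>) * Mminus N l x + \<theta> * Mplus N l x
       \<le> ((1 - \<theta>) * Mminus N l y + \<theta> * Mplus N l y) + c"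
proof -
  have "(1 - \<theta>) * Mminus N l x \<le> (1 - \<theta>) * (Mminus N l y + c)"
    using Mminus_le[OF l xy] th by (intro mult_left_mono) auto
  moreover have "\<theta> * Mplus N l x \<le> \<theta> * (Mplus N l y + c)"
    using Mplus_le[OF l xy] th by (intro mult_left_mono) auto
  ultimately show ?thesis by (simp add: algebra_simps)
qed


lemma P1_rd: "M \<in> P1 \<Longrightarrow> real_distribution M"
  unfolding P1_def real_distribution_def real_distribution_axioms_def by auto

context real_distribution begin

lemma qset:
  assumes t: "0 < t" "t < 1"
  shows "{x. cdf M x \<ge> t} \<noteq> {}" and "bdd_below {x. cdf M x \<ge> t}"
proof -
  have "eventually (\<lambda>x. cdf M x > t) at_top"
    using order_tendstoD(1)[OF cdf_lim_at_top_prob t(2)] .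
  then obtain x where "cdf M x > t" by (metis eventually_at_top_linorder order_refl)
  then show "{x. cdf M x \<ge> t} \<noteq> {}" by (auto intro!: exI[of _ x])
  have "eventually (\<lambda>x. cdf M x < t) at_bot"
    using order_tendstoD(2)[OF cdf_lim_at_bot t(1)] .
  then obtain b where b: "\<And>x. x \<le> b \<Longrightarrow> cdf M x < t" by (metis eventually_at_bot_linorder)
  show "bdd_below {x. cdf M x \<ge> t}"
  proof (rule bdd_belowI[of _ b])
    fix x assume "x \<in> {x. cdf M x \<ge> t}"
    then show "b \<le> x" using b[of x] by (cases "x \<le> b") auto
  qed
qed

lemma q_le: "0 < t \<Longrightarrow> t < 1 \<Longrightarrow> t \<le> cdf M x \<Longrightarrow> quantile M t \<le> x"
  unfolding quantile_def by (rule cInf_lower) (auto intro: qset)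

lemma q_lt: "0 < t \<Longrightarrow> t < 1 \<Longrightarrow> x < quantile M t \<Longrightarrow> cdf M x < t"
  using q_le[of t x] by (meson not_le)

lemma q_cdf: assumes t: "0 < t" "t < 1" shows "t \<le> cdf M (quantile M t)"
proof -
  let ?q = "quantile M t"
  have "((cdf M) \<longlongrightarrow> cdf M ?q) (at_right ?q)"
    using cdf_is_right_cont[of ?q] by (simp add: continuous_within)
  moreover have "eventually (\<lambda>y. t \<le> cdf M y) (at_right ?q)"
  proof -
    have "eventually (\<lambda>y. y > ?q) (at_right ?q)" by (rule eventually_at_right_less)
    moreover have "t \<le> cdf M y" if "y > ?q" for y
    proof -
      from that obtain x where x: "x \<in> {x. cdf M x \<ge> t}" "x < y"
        unfolding quantile_def using cInf_less_iff[OF qset[OF t]] by auto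
      then show ?thesis using cdf_nondecreasing[of x y] by auto
    qed
    ultimately show ?thesis by (auto elim: eventually_mono)
  qed
  ultimately show ?thesis by (intro tendsto_lowerbound) auto
qed

lemma q_mono: "0 < s \<Longrightarrow> s \<le> t \<Longrightarrow> t < 1 \<Longrightarrow> quantile M s \<le> quantile M t"
  using q_le[of s "quantile M t"] q_cdf[of t] by auto

lemma meas_pos: "emeasure M A > 0 \<longleftrightarrow> measure M A > 0"
  by (simp add: emeasure_eq_measure)

lemma q_supp: assumes t: "0 < t" "t < 1" shows "quantile M t \<in> msupp M"
  unfolding msupp_def
proof (intro CollectI allI impI)
  fix e :: real assume e: "e > 0"
  let ?q = "quantile M t"
  have "cdf M (?q - e/2) < t" using q_lt[OF t, of "?q - e/2"] e by auto
  then have "0 < measure M {?q - e/2<..?q}"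
    using q_cdf[OF t] cdf_diff_eq[of "?q - e/2" ?q] e by auto
  also have "\<dots> \<le> measure M (ball ?q e)"
    using e by (intro finite_measure_mono) (auto simp: ball_def dist_real_def)
  finally show "0 < emeasure M (ball ?q e)" by (simp add: meas_pos)
qed

end

context real_distribution begin

lemma atomless_iff: "atomless M \<longleftrightarrow> (\<forall>x. isCont (cdf M) x)"
  unfolding atomless_def isCont_cdf by (simp add: emeasure_eq_measure)

lemma q_strict:
  assumes a: "atomless M" and st: "0 < s" "s < t" "t < 1"
  shows "quantile M s < quantile M t"
proof (rule ccontr)
  assume "\<not> ?thesis"
  then have eq: "quantile M t \<le> quantile M s" by simp
  let ?q = "quantile M s"
  have "t \<le> cdf M ?q" using q_cdf[of t] st eq cdf_nondecreasing by (meson less_trans order_trans)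
  moreover have "cdf M ?q \<le> s"
  proof -
    have "(cdf M \<longlongrightarrow> cdf M ?q) (at_left ?q)"
      using a unfolding atomless_iff isCont_def by (auto intro: tendsto_mono[OF at_le])
    moreover have "eventually (\<lambda>x. cdf M x \<le> s) (at_left ?q)"
    proof -
      have "eventually (\<lambda>x. x < ?q) (at_left ?q)" unfolding eventually_at_filter by simp
      then show ?thesis by (rule eventually_mono) (use q_lt[of s] st in force)
    qed
    ultimately show ?thesis by (intro tendsto_upperbound) auto
  qed
  ultimately show False using st by simp
qed

lemma q_rcont:
  assumes c: "connected (msupp M)" and p: "0 < p" "p < 1" and eta: "\<eta> > 0"
  shows "\<exists>t. p < t \<and> t < 1 \<and> quantile M t < quantile M p + \<eta>"
proof (rule ccontr)
  assume H: "\<not> ?thesis"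
  let ?a = "quantile M p"
  let ?t1 = "(p + 1) / 2"
  have big: "quantile M t \<ge> ?a + \<eta>" if "p < t" "t < 1" for t using H that by force
  have aS: "?a \<in> msupp M" using q_supp p by auto
  have bS: "quantile M ?t1 \<in> msupp M" using q_supp p by auto
  have "quantile M ?t1 \<ge> ?a + \<eta>" using big p by auto
  then have "?a + \<eta>/2 \<le> quantile M ?t1" "?a \<le> ?a + \<eta>/2" using eta by auto
  then have cS: "?a + \<eta>/2 \<in> msupp M"
    using c aS bS unfolding connected_iff_interval by blast
  have Fa: "p \<le> cdf M ?a" using q_cdf p by auto
  have Fx: "cdf M (?a + 3*\<eta>/4) \<le> p"
  proof (rule ccontr)
    assume "\<not> ?thesis"
    then have gt: "cdf M (?a + 3*\<eta>/4) > p" by simp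
    let ?t = "(p + cdf M (?a + 3*\<eta>/4)) / 2"
    have "?t < 1" using gt cdf_bounded_prob[of "?a + 3*\<eta>/4"] by simp
    moreover have "p < ?t" using gt by simp
    ultimately have "quantile M ?t \<le> ?a + 3*\<eta>/4" using q_le[of ?t] p gt by simp
    moreover have "quantile M ?t \<ge> ?a + \<eta>" using big \<open>p < ?t\<close> \<open>?t < 1\<close> by blast
    ultimately show False using eta by simp
  qed
  have "measure M {?a<..?a + 3*\<eta>/4} = 0"
    using cdf_diff_eq[of ?a "?a + 3*\<eta>/4"] eta Fa Fx measure_nonneg[of M "{?a<..?a + 3*\<eta>/4}"] by linarith
  moreover have "measure M (ball (?a + \<eta>/2) (\<eta>/4)) \<le> measure M {?a<..?a + 3*\<eta>/4}"
    using eta by (intro finite_measure_mono) (auto simp: ball_def dist_real_def abs_if split: if_splits)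
  ultimately have "measure M (ball (?a + \<eta>/2) (\<eta>/4)) \<le> 0" by simp
  moreover have "measure M (ball (?a + \<eta>/2) (\<eta>/4)) > 0"
    using cS eta unfolding msupp_def by (simp add: meas_pos)
  ultimately show False by simp
qed

end

theorem lemma4p5:
  fixes N :: nat and l :: "nat \<Rightarrow> real" and nu :: "nat \<Rightarrow> real measure"
    and \<theta> :: real and nt mt :: "real measure"
  assumes "l \<in> unit_simplex N"
    and "\<forall>i<N. nu i \<in> P1"
    and "0 \<le> \<theta>" and "\<theta> \<le> 1"
    and "is_VMed N l \<theta> nu nt"
    and "is_HMed N l \<theta> nu mt"
  shows "((\<forall>i<N. atomless (nu i)) \<longrightarrow> atomless nt \<and> atomless mt)
       \<and> ((\<forall>i<N. connected (msupp (nu i))) \<longrightarrow> connected (msupp mt))"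
proof -
  note l = assms(1) and th = assms(3,4)
  have N: "0 < N" using N_pos[OF l] .
  have rd: "real_distribution (nu i)" if "i < N" for i using assms(2) that P1_rd by blast
  have rnt: "real_distribution nt" using assms(5) unfolding is_VMed_def real_distribution_def real_distribution_axioms_def by auto
  have rmt: "real_distribution mt" using assms(6) unfolding is_HMed_def real_distribution_def real_distribution_axioms_def by auto
  define med where "med x = (1-\<theta>) * Mminus N l x + \<theta> * Mplus N l x" for x
  have medle: "med x \<le> med y + c" if "\<forall>i<N. x i \<le> y i + c" for x y c
    unfolding med_def using med_le[OF l that th] .
  have cdfnt: "cdf nt x = med (\<lambda>i. cdf (nu i) x)" for x
    using assms(5) unfolding is_VMed_def med_def by auto
  have Qmt: "quantile mt t = med (\<lambda>i. quantile (nu i) t)" if "0 < t" "t < 1" for t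
    using assms(6) that unfolding is_HMed_def med_def by auto
  have part1: "atomless nt \<and> atomless mt" if A: "\<forall>i<N. atomless (nu i)"
  proof
    have ic: "isCont (cdf (nu i)) x" if "i < N" for i x
      using real_distribution.atomless_iff[OF rd[OF that]] A that by auto
    show "atomless nt"
      unfolding real_distribution.atomless_iff[OF rnt]
    proof
      fix x
      define g where "g y = (\<Sum>i<N. \<bar>cdf (nu i) y - cdf (nu i) x\<bar>)" for y
      have g0: "(g \<longlongrightarrow> 0) (at x)"
        unfolding g_def
        by (intro tendsto_null_sum tendsto_rabs_zero LIM_zero) (use ic isCont_def in auto)
      have bd: "norm (cdf nt y - cdf nt x) \<le> g y" for y
      proof -
        have le: "\<bar>cdf (nu i) y - cdf (nu i) x\<bar> \<le> g y" if "i < N" for i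
          unfolding g_def by (rule member_le_sum[of i "{..<N}" "\<lambda>i. \<bar>cdf (nu i) y - cdf (nu i) x\<bar>"]) (use that in auto)
        have "cdf nt y \<le> cdf nt x + g y" unfolding cdfnt
          by (rule medle) (use le in force)
        moreover have "cdf nt x \<le> cdf nt y + g y" unfolding cdfnt
          by (rule medle) (use le in force)
        ultimately show ?thesis by simp
      qed
      have "((\<lambda>y. cdf nt y - cdf nt x) \<longlongrightarrow> 0) (at x)"
        by (rule Lim_null_comparison[OF _ g0]) (use bd in auto)
      then show "isCont (cdf nt) x" unfolding isCont_def by (rule LIM_zero_cancel)
    qed
    show "atomless mt"
      unfolding atomless_def
    proof
      fix a
      show "emeasure mt {a} = 0"
      proof (rule ccontr)
        interpret R: real_distribution mt by (rule rmt)
        assume "emeasure mt {a} \<noteq> 0"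
        then have mpos: "measure mt {a} > 0" using R.meas_pos by (simp add: zero_less_iff_neq_zero)
        let ?m = "measure mt {a}"
        have split: "cdf mt a = measure mt {..<a} + ?m"
          unfolding cdf_def2 by (subst R.finite_measure_Union[symmetric]) (auto intro!: arg_cong[where f="measure mt"])
        have lo: "cdf mt x \<le> measure mt {..<a}" if "x < a" for x
          unfolding cdf_def2 using that by (intro R.finite_measure_mono) auto
        define s where "s = cdf mt a - 2 * ?m / 3"
        define t where "t = cdf mt a - ?m / 3"
        have st: "0 < s" "s < t" "t < 1"
          using split mpos R.cdf_bounded_prob[of a] measure_nonneg[of mt "{..<a}"] unfolding s_def t_def by linarith+
        have qt: "quantile mt t \<le> a" using R.q_le[of t a] st mpos unfolding t_def by auto
        have qs: "a \<le> quantile mt s"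
        proof (rule ccontr)
          assume "\<not> ?thesis"
          then have "cdf mt (quantile mt s) \<le> measure mt {..<a}" using lo by simp
          moreover have "s \<le> cdf mt (quantile mt s)" using R.q_cdf st by auto
          ultimately show False using split mpos unfolding s_def by simp
        qed
        define d where "d = Min ((\<lambda>i. quantile (nu i) t - quantile (nu i) s) ` {..<N})"
        have dpos: "0 < d" unfolding d_def using N
          by (subst Min_gr_iff) (auto intro: real_distribution.q_strict[OF rd] A st simp: A)
        have "\<forall>i<N. quantile (nu i) s \<le> quantile (nu i) t + (- d)"
        proof (intro allI impI)
          fix i assume "i < N"
          then have "d \<le> quantile (nu i) t - quantile (nu i) s" unfolding d_def by (intro Min_le) auto
          then show "quantile (nu i) s \<le> quantile (nu i) t + (- d)" by simp
        qed
        then have "med (\<lambda>i. quantile (nu i) s) \<le> med (\<lambda>i. quantile (nu i) t) + (- d)" by (rule medle)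
        then have "quantile mt s < quantile mt t" using Qmt st dpos by simp
        with qs qt show False by simp
      qed
    qed
  qed
  have part2: "connected (msupp mt)" if C: "\<forall>i<N. connected (msupp (nu i))"
  proof (rule ccontr)
    interpret R: real_distribution mt by (rule rmt)
    assume "\<not> ?thesis"
    then obtain a b c where aS: "a \<in> msupp mt" and bS: "b \<in> msupp mt" and ac: "a \<le> c" and cb: "c \<le> b"
      and cS: "c \<notin> msupp mt"
      unfolding connected_iff_interval by blast
    from cS obtain e0 where e0: "e0 > 0" "\<not> emeasure mt (ball c e0) > 0" unfolding msupp_def by auto
    have "a \<noteq> c" "b \<noteq> c" using aS bS cS by auto
    then have ac': "a < c" and cb': "c < b" using ac cb by auto
    define e where "e = min e0 (min (c - a) (b - c))"
    have e: "e > 0" "e \<le> e0" "e \<le> c - a" "e \<le> b - c" using e0 ac' cb' unfolding e_def by auto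
    have "measure mt (ball c e) \<le> measure mt (ball c e0)"
      using e by (intro R.finite_measure_mono) auto
    also have "\<dots> \<le> 0" using e0(2) R.meas_pos by simp
    finally have c0: "measure mt (ball c e) \<le> 0" .
    have a0: "measure mt (ball a e) > 0" using aS e unfolding msupp_def by (simp add: R.meas_pos)
    have b0: "measure mt (ball b e) > 0" using bS e unfolding msupp_def by (simp add: R.meas_pos)
    define p where "p = cdf mt c"
    have p0: "0 < p"
    proof -
      have "measure mt (ball a e) \<le> measure mt {..c}"
        using e by (intro R.finite_measure_mono) (auto simp: ball_def dist_real_def)
      then show ?thesis using a0 unfolding p_def cdf_def2 by simp
    qed
    have p1: "p < 1"
    proof -
      have "measure mt (ball b e) \<le> measure mt {c<..b+e}"
        using e by (intro R.finite_measure_mono) (auto simp: ball_def dist_real_def abs_if split: if_splits)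
      then show ?thesis using b0 R.cdf_diff_eq[of c "b+e"] R.cdf_bounded_prob[of "b+e"] cb' e unfolding p_def by simp
    qed
    have "measure mt {c - e/2<..c} \<le> measure mt (ball c e)"
      using e by (intro R.finite_measure_mono) (auto simp: ball_def dist_real_def abs_if split: if_splits)
    then have "p \<le> cdf mt (c - e/2)" using c0 R.cdf_diff_eq[of "c - e/2" c] e unfolding p_def by simp
    then have qp: "quantile mt p \<le> c - e/2" using R.q_le p0 p1 by blast
    have "measure mt {c<..c + e/2} \<le> measure mt (ball c e)"
      using e by (intro R.finite_measure_mono) (auto simp: ball_def dist_real_def abs_if split: if_splits)
    then have Fc: "cdf mt (c + e/2) \<le> p" using c0 R.cdf_diff_eq[of c "c + e/2"] e unfolding p_def by simp
    have big: "c + e/2 \<le> quantile mt t" if "p < t" "t < 1" for t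
    proof (rule ccontr)
      assume "\<not> ?thesis"
      then have "cdf mt (quantile mt t) \<le> cdf mt (c + e/2)" by (intro R.cdf_nondecreasing) simp
      moreover have "t \<le> cdf mt (quantile mt t)" using R.q_cdf that p0 by auto
      ultimately show False using Fc that by simp
    qed
    have "\<forall>i<N. \<exists>t. p < t \<and> t < 1 \<and> quantile (nu i) t < quantile (nu i) p + e/2"
      using real_distribution.q_rcont[OF rd] C p0 p1 e by auto
    then obtain T where T: "\<And>i. i < N \<Longrightarrow> p < T i \<and> T i < 1 \<and> quantile (nu i) (T i) < quantile (nu i) p + e/2"
      by metis
    define t0 where "t0 = Min (T ` {..<N})"
    have t0p: "p < t0" unfolding t0_def using N T by (subst Min_gr_iff) auto
    have "t0 \<le> T 0" unfolding t0_def using N by (intro Min_le) auto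
    then have t01: "t0 < 1" using T[of 0] N by auto
    have "\<forall>i<N. quantile (nu i) t0 \<le> quantile (nu i) p + e/2"
    proof (intro allI impI)
      fix i assume i: "i < N"
      have "t0 \<le> T i" unfolding t0_def using i by (intro Min_le) auto
      then have "quantile (nu i) t0 \<le> quantile (nu i) (T i)"
        using real_distribution.q_mono[OF rd[OF i], of t0 "T i"] t0p p0 T[OF i] by auto
      then show "quantile (nu i) t0 \<le> quantile (nu i) p + e/2" using T[OF i] by simp
    qed
    then have "med (\<lambda>i. quantile (nu i) t0) \<le> med (\<lambda>i. quantile (nu i) p) + e/2" by (rule medle)
    then have "quantile mt t0 \<le> quantile mt p + e/2" using Qmt t0p t01 p0 p1 by simp
    moreover have "c + e/2 \<le> quantile mt t0" using big t0p t01 by simp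
    ultimately show False using qp e by simp
  qed
  show ?thesis using part1 part2 by blast
qed

end
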